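(* For every pair of compatible counting-star formulas $C_1,C_2$, the formula $\big(\bigvee_{C_3:\ \mathrm{ERes}(C_1,C_2,C_3)}C_3\big)\Rightarrow (C_1*C_2)$ is valid, i.e. every $L$-environment satisfying some counting-star formula $C_3$ with $\mathrm{ERes}(C_1,C_2,C_3)$ satisfies $C_1*C_2$.
   Context: BASE. Fix a finite vocabulary $L=\mathcal A\cup\mathcal F$ ($\mathcal A$ unary, $\mathcal F$ binary predicate symbols); equality is a logical symbol not in $\mathcal F$, always interpreted as identity. Formulas: first-order logic with equality, counting quantifiers $\exists^{\ge k}x.G$, $\exists^{=k}x.G$, and spatial conjunction $*$. An environment has a finite nonempty domain $D$, interpretations of the predicate symbols, and an assignment to variables. $\mathrm{split}\,e\,[e_1,\dots,e_r]$ (same domain, same variable assignment) holds iff for each predicate symbol $P$, $e(P)$ is the disjoint union of the $e_i(P)$; $[\![G_1*G_2]\!]e$ holds iff some $e_1,e_2$ with $\mathrm{split}\,e\,[e_1,e_2]$ satisfy $[\![G_1]\!]e_1$, $[\![G_2]\!]e_2$. $G\sim H$ means equal truth values in all environments. NORMAL FORMS. Atoms over distinct variables $u_1,\dots,u_p$ are $A(u_i)$, $f(u_i,u_j)$, $u_i=u_j$; a GCCAT formula over them contains for each such atom exactly one of the atom or its negation (nothing else), with $u_i=u_j$ positive iff $i=j$. Fix distinct $x_1,\dots,x_n$ and $x$. $\mathrm{ext}(x_1,\dots,x_n;x)$ is the set of conjunctions containing, for each atom over $x,x_1,\dots,x_n$ containing $x$, exactly one of the atom or its negation, with $x=x$ positive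 and $x=x_i$, $x_i=x$ negated. For $p\ge1$, $C_p=\{0,\dots,p-1,p^+\}$; $\exists^{c}x.G$ means $\exists^{=c}x.G$ for integer $c$ and $\exists^{\ge p}x.G$ for $c=p^+$. A counting-star formula is $C=E\wedge F\wedge\bigwedge_{i=1}^{k}\exists^{s_i}x.F'_i$ with $E=\bigwedge_{j=1}^m y_j=x_{i_j}$ ($y_j$ distinct variables not among $x,x_1,\dots,x_n$), $F$ GCCAT over $x_1,\dots,x_n$, $F'_1,\dots,F'_k$ an enumeration of $\mathrm{ext}(x_1,\dots,x_n;x)$, $s_i\in C_q$ for some $q\ge2$. Two counting-star formulas are compatible if they have the same equality part $E$ and GCCAT parts over the same $x_1,\dots,x_n$. OPERATIONS. $\mathrm{Pos}(T)$ is the set of non-equality positive literals of a conjunction $T$. For $T_1,T_2\in\mathrm{ext}$, $T_1\oplus T_2$ is defined iff $\mathrm{Pos}(T_1)\cap\mathrm{Pos}(T_2)=\emptyset$ and is the unique $T\in\mathrm{ext}$ with $\mathrm{Pos}(T)=\mathrm{Pos}(T_1)\cup\mathrm{Pos}(T_2)$; for GCCAT $F_1,F_2$ over $x_1,\dots,x_n$, $F_1\otimes F_2$ is defined iff $\mathrm{Pos}(F_1)\cap\mathrm{Pos}(F_2)=\emptyset$ and is the unique GCCAT $F$ with $\mathrm{Pos}(F)=\mathrm{Pos}(F_1)\cup\mathrm{Pos}(F_2)$. TRANSLATION. $L'=L\cup\{B_1,B_2\}$ (new unary symbols, split by $*$ like all others). $\mathrm{Mark}_\emptyset(x)=\neg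 B_1(x)\wedge\neg B_2(x)$, $\mathrm{Mark}_{\{1\}}(x)=B_1(x)\wedge\neg B_2(x)$, $\mathrm{Mark}_{\{2\}}(x)=\neg B_1(x)\wedge B_2(x)$, $\mathrm{Mark}_{\{1,2\}}(x)=B_1(x)\wedge B_2(x)$. $\mathcal E_0$: GCCAT over $x_1,\dots,x_n$ whose only positive literals are $x_i=x_i$; $\varnothing_x$: element of $\mathrm{ext}$ whose only positive literal is $x=x$; $\delta(x):=\bigwedge_i x\ne x_i$. $G_E:=\mathcal E_0\wedge\forall x.(\delta(x)\to\varnothing_x\wedge\mathrm{Mark}_\emptyset(x))$; $K(F):=F\wedge\forall x.(\delta(x)\to\varnothing_x\wedge\mathrm{Mark}_\emptyset(x))$; $\mathrm{Any}_m(T):=\mathcal E_0\wedge\forall x.(\delta(x)\to(T\wedge\mathrm{Mark}_m(x))\vee(\varnothing_x\wedge\mathrm{Mark}_\emptyset(x)))$; $\mathrm{One}_m(T):=\mathrm{Any}_m(T)\wedge\exists^{=1}x.(\delta(x)\wedge T\wedge\mathrm{Mark}_m(x))$. $X_m(\exists^{0}x.T):=G_E$, $X_m(\exists^{i+1}x.T):=\mathrm{One}_m(T)*X_m(\exists^{i}x.T)$, $X_m(\exists^{p^+}x.T):=X_m(\exists^{p}x.T)*\mathrm{Any}_m(T)$. $S_m(C):=E\wedge\big(K(F)*X_m(\exists^{s_1}x.F'_1)*\dots*X_m(\exists^{s_k}x.F'_k)\big)$. RULES (when $T_1\oplus T_2$ is defined): (1) $\mathrm{One}_{\{1\}}(T_1)*\mathrm{One}_{\{2\}}(T_2)\to\mathrm{One}_{\{1,2\}}(T_1\oplus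 T_2)$; (2) $\mathrm{One}_{\{1\}}(T_1)*\mathrm{Any}_{\{2\}}(T_2)\to\mathrm{One}_{\{1,2\}}(T_1\oplus T_2)*\mathrm{Any}_{\{2\}}(T_2)$; (3) $\mathrm{Any}_{\{1\}}(T_1)*\mathrm{One}_{\{2\}}(T_2)\to\mathrm{Any}_{\{1\}}(T_1)*\mathrm{One}_{\{1,2\}}(T_1\oplus T_2)$; (4) $\mathrm{Any}_{\{1\}}(T_1)*\mathrm{Any}_{\{2\}}(T_2)\to\mathrm{Any}_{\{1\}}(T_1)*\mathrm{Any}_{\{2\}}(T_2)*\mathrm{Any}_{\{1,2\}}(T_1\oplus T_2)$; (5) $\mathrm{Any}_{\{1\}}(T)\to G_E$; (6) $\mathrm{Any}_{\{2\}}(T)\to G_E$. DERIVATION. For compatible $C_1=E\wedge F_1\wedge\dots$, $C_2=E\wedge F_2\wedge\dots$, write $S_{\{1\}}(C_1)*S_{\{2\}}(C_2)$ as $E\wedge W$ where $W$ is the spatial conjunction of $K(F_1)$, $K(F_2)$ and all (unfolded) $\mathrm{One}_m$, $\mathrm{Any}_m$, $G_E$ conjuncts of the $X_{\{1\}}$ and $X_{\{2\}}$ parts. $E\wedge H$ is a derivation result if $H$ is obtained from $W$ by: first replacing $K(F_1)*K(F_2)$ by $K(F_1\otimes F_2)$ if defined, else by $\mathit{false}$; then applying finitely many rule instances of (1)–(6) to spatial sub-conjunctions, modulo associativity and commutativity of $*$, the unit law $G*G_E\sim G$ and idempotence $\mathrm{Any}_m(T)*\mathrm{Any}_m(T)\sim\mathrm{Any}_m(T)$,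 with all applications of (1)–(4) preceding those of (5)–(6); and such that finally, apart from the $K$-conjunct, $H$ contains only conjuncts $\mathrm{One}_{\{1,2\}}(T)$ and $\mathrm{Any}_{\{1,2\}}(T)$. $\mathrm{ERes}(C_1,C_2,C_3)$ holds for a counting-star formula $C_3$ (same variables, same $E$) iff $S_{\{1,2\}}(C_3)$ coincides, modulo the same identifications, with some derivation result of $S_{\{1\}}(C_1)*S_{\{2\}}(C_2)$. *)

theory Defs
  imports Main "HOL-Library.Multiset"
begin

type_synonym var = nat

datatype ('u, 'b) fm =
    FTrue | FFalse
  | FUn 'u var | FBin 'b var var | FEq var var
  | FNeg "('u, 'b) fm" | FAnd "('u, 'b) fm" "('u, 'b) fm" | FOr "('u, 'b) fm" "('u, 'b) fm"
  | FEx var "('u, 'b) fm" | FAll var "('u, 'b) fm"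
  | FExGe nat var "('u, 'b) fm"
  | FExEq nat var "('u, 'b) fm"
  | FStar "('u, 'b) fm" "('u, 'b) fm"

definition FImp :: "('u, 'b) fm \<Rightarrow> ('u, 'b) fm \<Rightarrow> ('u, 'b) fm" where
  "FImp a b = FOr (FNeg a) b"

record ('d, 'u, 'b) env =
  env_dom :: "'d set"
  env_U   :: "'u \<Rightarrow> 'd set"
  env_B   :: "'b \<Rightarrow> ('d \<times> 'd) set"
  env_asg :: "var \<Rightarrow> 'd"

definition wf_env :: "('d, 'u, 'b) env \<Rightarrow> bool" where
  "wf_env e \<longleftrightarrow> finite (env_dom e) \<and> env_dom e \<noteq> {}
     \<and> (\<forall>P. env_U e P \<subseteq> env_dom e) \<and> (\<forall>f. env_B e f \<subseteq> env_dom e \<times> env_dom e)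
     \<and> (\<forall>v. env_asg e v \<in> env_dom e)"

definition split2 :: "('d, 'u, 'b) env \<Rightarrow> ('d, 'u, 'b) env \<Rightarrow> ('d, 'u, 'b) env \<Rightarrow> bool" where
  "split2 e e1 e2 \<longleftrightarrow> env_dom e1 = env_dom e \<and> env_dom e2 = env_dom e
     \<and> env_asg e1 = env_asg e \<and> env_asg e2 = env_asg e
     \<and> (\<forall>P. env_U e P = env_U e1 P \<union> env_U e2 P \<and> env_U e1 P \<inter> env_U e2 P = {})
     \<and> (\<forall>f. env_B e f = env_B e1 f \<union> env_B e2 f \<and> env_B e1 f \<inter> env_B e2 f = {})"

definition upd :: "('d, 'u, 'b) env \<Rightarrow> var \<Rightarrow> 'd \<Rightarrow> ('d, 'u, 'b) env" where
  "upd e x d = e\<lparr>env_asg := (env_asg e)(x := d)\<rparr>"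

primrec sat :: "('d, 'u, 'b) env \<Rightarrow> ('u, 'b) fm \<Rightarrow> bool" where
  "sat e FTrue = True"
| "sat e FFalse = False"
| "sat e (FUn P v) = (env_asg e v \<in> env_U e P)"
| "sat e (FBin f u v) = ((env_asg e u, env_asg e v) \<in> env_B e f)"
| "sat e (FEq u v) = (env_asg e u = env_asg e v)"
| "sat e (FNeg G) = (\<not> sat e G)"
| "sat e (FAnd G H) = (sat e G \<and> sat e H)"
| "sat e (FOr G H) = (sat e G \<or> sat e H)"
| "sat e (FEx x G) = (\<exists>d\<in>env_dom e. sat (upd e x d) G)"
| "sat e (FAll x G) = (\<forall>d\<in>env_dom e. sat (upd e x d) G)"
| "sat e (FExGe k x G) = (card {d \<in> env_dom e. sat (upd e x d) G} \<ge> k)"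
| "sat e (FExEq k x G) = (card {d \<in> env_dom e. sat (upd e x d) G} = k)"
| "sat e (FStar G H) = (\<exists>e1 e2. split2 e e1 e2 \<and> sat e1 G \<and> sat e2 H)"

datatype ('u, 'b) atom = AU 'u var | AB 'b var var

primrec atom_fm :: "('u, 'b) atom \<Rightarrow> ('u, 'b) fm" where
  "atom_fm (AU P v) = FUn P v"
| "atom_fm (AB f u v) = FBin f u v"

primrec avars :: "('u, 'b) atom \<Rightarrow> var set" where
  "avars (AU P v) = {v}"
| "avars (AB f u v) = {u, v}"

definition atoms_over :: "var set \<Rightarrow> ('u, 'b) atom set" where
  "atoms_over V = {a. avars a \<subseteq> V}"

definition atoms_x :: "var \<Rightarrow> var list \<Rightarrow> ('u, 'b) atom set" where
  "atoms_x x xs = {a \<in> atoms_over (insert x (set xs)). x \<in> avars a}"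

definition lit :: "('u, 'b) atom \<Rightarrow> bool \<Rightarrow> ('u, 'b) fm" where
  "lit a b = (if b then atom_fm a else FNeg (atom_fm a))"

definition conj_list :: "('u, 'b) fm list \<Rightarrow> ('u, 'b) fm" where
  "conj_list l = foldr FAnd l FTrue"

definition conj_set :: "('u, 'b) fm set \<Rightarrow> ('u, 'b) fm" where
  "conj_set S = conj_list (SOME l. set l = S \<and> distinct l)"

text \<open>A conjunction containing exactly one of each atom or its negation is determined by
  its set Pos of positive non-equality literals; we represent GCCAT formulas and elements of
  ext by these sets and build the formula from them.\<close>

definition gccat_fm :: "var list \<Rightarrow> ('u, 'b) atom set \<Rightarrow> ('u, 'b) fm" where
  "gccat_fm xs P = FAnd
     (conj_list [if i = j then FEq (xs ! i) (xs ! j) else FNeg (FEq (xs ! i) (xs ! j)).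
                 i \<leftarrow> [0..<length xs], j \<leftarrow> [0..<length xs]])
     (conj_set ((\<lambda>a. lit a (a \<in> P)) ` atoms_over (set xs)))"

definition gccat_sets :: "var list \<Rightarrow> ('u, 'b) atom set set" where
  "gccat_sets xs = Pow (atoms_over (set xs))"

definition ext_fm :: "var \<Rightarrow> var list \<Rightarrow> ('u, 'b) atom set \<Rightarrow> ('u, 'b) fm" where
  "ext_fm x xs P = FAnd (FEq x x)
     (FAnd (conj_list (concat [[FNeg (FEq x xi), FNeg (FEq xi x)]. xi \<leftarrow> xs]))
          (conj_set ((\<lambda>a. lit a (a \<in> P)) ` atoms_x x xs)))"

definition ext_sets :: "var \<Rightarrow> var list \<Rightarrow> ('u, 'b) atom set set" where
  "ext_sets x xs = Pow (atoms_x x xs)"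

section \<open>Counting-star formulas\<close>

text \<open>Elements of C_p: Exactly k for k < p, and AtLeast p (written p+).\<close>
datatype cval = Exactly nat | AtLeast nat

definition in_C :: "nat \<Rightarrow> cval \<Rightarrow> bool" where
  "in_C p c = (case c of Exactly k \<Rightarrow> k < p | AtLeast k \<Rightarrow> k = p)"

definition cnt_fm :: "var \<Rightarrow> cval \<Rightarrow> ('u, 'b) fm \<Rightarrow> ('u, 'b) fm" where
  "cnt_fm x c G = (case c of Exactly k \<Rightarrow> FExEq k x G | AtLeast k \<Rightarrow> FExGe k x G)"

text \<open>Data of a counting-star formula E /\ F /\ AND_{T in ext} EX^{s T} x. T :
  cs_E lists the pairs (y_j, i_j) (with 1-based index i_j), cs_xs = [x1..xn],
  cs_x = x, cs_F = Pos(F), cs_s T = the count attached to the ext element T.\<close>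
record ('u, 'b) cstar =
  cs_E  :: "(var \<times> nat) list"
  cs_xs :: "var list"
  cs_x  :: var
  cs_F  :: "('u, 'b) atom set"
  cs_s  :: "('u, 'b) atom set \<Rightarrow> cval"

definition is_cstar :: "('u, 'b) cstar \<Rightarrow> bool" where
  "is_cstar C \<longleftrightarrow> distinct (cs_xs C) \<and> cs_x C \<notin> set (cs_xs C)
     \<and> distinct (map fst (cs_E C))
     \<and> (\<forall>(y, i) \<in> set (cs_E C). y \<noteq> cs_x C \<and> y \<notin> set (cs_xs C) \<and> 1 \<le> i \<and> i \<le> length (cs_xs C))
     \<and> cs_F C \<in> gccat_sets (cs_xs C)
     \<and> (\<exists>q\<ge>2. \<forall>T \<in> ext_sets (cs_x C) (cs_xs C). in_C q (cs_s C T))"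

definition E_fm :: "(var \<times> nat) list \<Rightarrow> var list \<Rightarrow> ('u, 'b) fm" where
  "E_fm E xs = conj_list (map (\<lambda>(y, i). FEq y (xs ! (i - 1))) E)"

definition cs_fm :: "('u, 'b) cstar \<Rightarrow> ('u, 'b) fm" where
  "cs_fm C = FAnd (E_fm (cs_E C) (cs_xs C))
     (FAnd (gccat_fm (cs_xs C) (cs_F C))
          (conj_set ((\<lambda>T. cnt_fm (cs_x C) (cs_s C T) (ext_fm (cs_x C) (cs_xs C) T))
                       ` ext_sets (cs_x C) (cs_xs C))))"

definition compatible :: "('u, 'b) cstar \<Rightarrow> ('u, 'b) cstar \<Rightarrow> bool" where
  "compatible C1 C2 \<longleftrightarrow> cs_E C1 = cs_E C2 \<and> cs_xs C1 = cs_xs C2 \<and> cs_x C1 = cs_x C2"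

section \<open>Translation into L' = L + {B1, B2}\<close>

datatype 'u lsym = Orig 'u | BB1 | BB2

definition lift :: "('u, 'b) fm \<Rightarrow> ('u lsym, 'b) fm" where
  "lift = map_fm Orig id"

definition mark_fm :: "nat set \<Rightarrow> var \<Rightarrow> ('u lsym, 'b) fm" where
  "mark_fm m x = FAnd (if 1 \<in> m then FUn BB1 x else FNeg (FUn BB1 x))
                     (if 2 \<in> m then FUn BB2 x else FNeg (FUn BB2 x))"

definition delta_fm :: "var \<Rightarrow> var list \<Rightarrow> ('u, 'b) fm" where
  "delta_fm x xs = conj_list (map (\<lambda>xi. FNeg (FEq x xi)) xs)"

definition rest_empty :: "var \<Rightarrow> var list \<Rightarrow> ('u lsym, 'b) fm" where
  "rest_empty x xs = FAll x (FImp (delta_fm x xs) (FAnd (lift (ext_fm x xs {})) (mark_fm {} x)))"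

definition GE_fm :: "var \<Rightarrow> var list \<Rightarrow> ('u lsym, 'b) fm" where
  "GE_fm x xs = FAnd (lift (gccat_fm xs {})) (rest_empty x xs)"

definition K_fm :: "var \<Rightarrow> var list \<Rightarrow> ('u, 'b) atom set \<Rightarrow> ('u lsym, 'b) fm" where
  "K_fm x xs F = FAnd (lift (gccat_fm xs F)) (rest_empty x xs)"

definition Any_fm :: "var \<Rightarrow> var list \<Rightarrow> nat set \<Rightarrow> ('u, 'b) atom set \<Rightarrow> ('u lsym, 'b) fm" where
  "Any_fm x xs m T = FAnd (lift (gccat_fm xs {}))
     (FAll x (FImp (delta_fm x xs)
        (FOr (FAnd (lift (ext_fm x xs T)) (mark_fm m x))
            (FAnd (lift (ext_fm x xs {})) (mark_fm {} x)))))"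

definition One_fm :: "var \<Rightarrow> var list \<Rightarrow> nat set \<Rightarrow> ('u, 'b) atom set \<Rightarrow> ('u lsym, 'b) fm" where
  "One_fm x xs m T = FAnd (Any_fm x xs m T)
     (FExEq 1 x (FAnd (delta_fm x xs) (FAnd (lift (ext_fm x xs T)) (mark_fm m x))))"

text \<open>Spatial conjuncts occurring in S_m(C) and in derivations. A spatial conjunction of such
  conjuncts, taken modulo associativity and commutativity of *, is a multiset of tokens.\<close>
datatype ('u, 'b) tok =
    TK "('u, 'b) atom set"
  | TFalse
  | TGE
  | TOne "nat set" "('u, 'b) atom set"
  | TAny "nat set" "('u, 'b) atom set"

primrec tok_fm :: "var \<Rightarrow> var list \<Rightarrow> ('u, 'b) tok \<Rightarrow> ('u lsym, 'b) fm" where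
  "tok_fm x xs (TK F) = K_fm x xs F"
| "tok_fm x xs TFalse = FFalse"
| "tok_fm x xs TGE = GE_fm x xs"
| "tok_fm x xs (TOne m T) = One_fm x xs m T"
| "tok_fm x xs (TAny m T) = Any_fm x xs m T"

definition X_exact :: "nat set \<Rightarrow> ('u, 'b) atom set \<Rightarrow> nat \<Rightarrow> ('u, 'b) tok multiset" where
  "X_exact m T k = replicate_mset k (TOne m T) + {#TGE#}"

definition X_tok :: "nat set \<Rightarrow> ('u, 'b) atom set \<Rightarrow> cval \<Rightarrow> ('u, 'b) tok multiset" where
  "X_tok m T c = (case c of Exactly k \<Rightarrow> X_exact m T k
                          | AtLeast p \<Rightarrow> X_exact m T p + {#TAny m T#})"

definition S_tok :: "nat set \<Rightarrow> ('u, 'b) cstar \<Rightarrow> ('u, 'b) tok multiset" where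
  "S_tok m C = {#TK (cs_F C)#}
     + (\<Sum>T \<in> ext_sets (cs_x C) (cs_xs C). X_tok m T (cs_s C T))"

definition star_fm :: "('u lsym, 'b) fm list \<Rightarrow> ('u lsym, 'b) fm" where
  "star_fm l = foldr FStar (butlast l) (last l)"

text \<open>The formula S_m(C) itself (for reference; the derivation works on token multisets).\<close>
definition S_fm :: "nat set \<Rightarrow> ('u, 'b) cstar \<Rightarrow> ('u lsym, 'b) fm" where
  "S_fm m C = FAnd (lift (E_fm (cs_E C) (cs_xs C)))
     (star_fm (map (tok_fm (cs_x C) (cs_xs C)) (SOME l. mset l = S_tok m C)))"

section \<open>Derivations\<close>

text \<open>Identifications: unit law G * G_E ~ G and idempotence Any_m(T) * Any_m(T) ~ Any_m(T)
  (both directions; AC is built into multisets).\<close>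
definition ident :: "('u, 'b) tok multiset \<Rightarrow> ('u, 'b) tok multiset \<Rightarrow> bool" where
  "ident M M' \<longleftrightarrow>
     (\<exists>R. R \<noteq> {#} \<and> ((M = R + {#TGE#} \<and> M' = R) \<or> (M = R \<and> M' = R + {#TGE#})))
   \<or> (\<exists>R m T. (M = R + {#TAny m T, TAny m T#} \<and> M' = R + {#TAny m T#})
            \<or> (M = R + {#TAny m T#} \<and> M' = R + {#TAny m T, TAny m T#}))"

definition rules14 :: "('u, 'b) tok multiset \<Rightarrow> ('u, 'b) tok multiset \<Rightarrow> bool" where
  "rules14 L Rh \<longleftrightarrow> (\<exists>T1 T2. T1 \<inter> T2 = {} \<and>
     ((L = {#TOne {1} T1, TOne {2} T2#} \<and> Rh = {#TOne {1,2} (T1 \<union> T2)#})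
    \<or> (L = {#TOne {1} T1, TAny {2} T2#} \<and> Rh = {#TOne {1,2} (T1 \<union> T2), TAny {2} T2#})
    \<or> (L = {#TAny {1} T1, TOne {2} T2#} \<and> Rh = {#TAny {1} T1, TOne {1,2} (T1 \<union> T2)#})
    \<or> (L = {#TAny {1} T1, TAny {2} T2#}
         \<and> Rh = {#TAny {1} T1, TAny {2} T2, TAny {1,2} (T1 \<union> T2)#})))"

definition rules56 :: "('u, 'b) tok multiset \<Rightarrow> ('u, 'b) tok multiset \<Rightarrow> bool" where
  "rules56 L Rh \<longleftrightarrow> (\<exists>T. (L = {#TAny {1} T#} \<or> L = {#TAny {2} T#}) \<and> Rh = {#TGE#})"

definition apply_rule ::
  "(('u, 'b) tok multiset \<Rightarrow> ('u, 'b) tok multiset \<Rightarrow> bool)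
   \<Rightarrow> ('u, 'b) tok multiset \<Rightarrow> ('u, 'b) tok multiset \<Rightarrow> bool" where
  "apply_rule R M M' \<longleftrightarrow> (\<exists>L Rh Z. R L Rh \<and> M = L + Z \<and> M' = Rh + Z)"

definition phase1 :: "('u, 'b) tok multiset \<Rightarrow> ('u, 'b) tok multiset \<Rightarrow> bool" where
  "phase1 = (\<lambda>M M'. apply_rule rules14 M M' \<or> ident M M')\<^sup>*\<^sup>*"

definition phase2 :: "('u, 'b) tok multiset \<Rightarrow> ('u, 'b) tok multiset \<Rightarrow> bool" where
  "phase2 = (\<lambda>M M'. apply_rule rules56 M M' \<or> ident M M')\<^sup>*\<^sup>*"

definition W0 :: "('u, 'b) cstar \<Rightarrow> ('u, 'b) cstar \<Rightarrow> ('u, 'b) tok multiset" where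
  "W0 C1 C2 = (S_tok {1} C1 + S_tok {2} C2 - {#TK (cs_F C1), TK (cs_F C2)#})
     + {#if cs_F C1 \<inter> cs_F C2 = {} then TK (cs_F C1 \<union> cs_F C2) else TFalse#}"

definition final_form :: "('u, 'b) tok multiset \<Rightarrow> bool" where
  "final_form H \<longleftrightarrow> (\<forall>t \<in># H. (\<exists>F. t = TK F) \<or> t = TFalse \<or> t = TGE
       \<or> (\<exists>T. t = TOne {1,2} T \<or> t = TAny {1,2} T))"

definition deriv_result :: "('u, 'b) cstar \<Rightarrow> ('u, 'b) cstar \<Rightarrow> ('u, 'b) tok multiset \<Rightarrow> bool" where
  "deriv_result C1 C2 H \<longleftrightarrow> (\<exists>W1. phase1 (W0 C1 C2) W1 \<and> phase2 W1 H) \<and> final_form H"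

definition ERes :: "('u, 'b) cstar \<Rightarrow> ('u, 'b) cstar \<Rightarrow> ('u, 'b) cstar \<Rightarrow> bool" where
  "ERes C1 C2 C3 \<longleftrightarrow> compatible C1 C2
     \<and> cs_E C3 = cs_E C1 \<and> cs_xs C3 = cs_xs C1 \<and> cs_x C3 = cs_x C1
     \<and> (\<exists>H. deriv_result C1 C2 H \<and> ident\<^sup>*\<^sup>* (S_tok {1,2} C3) H)"

end

theory Submission
  imports Defs
begin

definition holds :: "('d,'u,'b) env \<Rightarrow> ('u,'b) atom \<Rightarrow> bool" where
  "holds e a = sat e (atom_fm a)"

lemma holds_simps[simp]:
  "holds e (AU P v) \<longleftrightarrow> env_asg e v \<in> env_U e P"
  "holds e (AB f u v) \<longleftrightarrow> (env_asg e u, env_asg e v) \<in> env_B e f"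
  by (simp_all add: holds_def)

lemma sat_conj_list[simp]: "sat e (conj_list l) \<longleftrightarrow> (\<forall>f\<in>set l. sat e f)"
  by (induction l) (simp_all add: conj_list_def)

lemma sat_conj_set: "finite S \<Longrightarrow> sat e (conj_set S) \<longleftrightarrow> (\<forall>f\<in>S. sat e f)"
  unfolding conj_set_def
  by (metis (mono_tags, lifting) finite_distinct_list sat_conj_list someI_ex)

lemma sat_lit[simp]: "sat e (lit a b) \<longleftrightarrow> (holds e a \<longleftrightarrow> b)"
  by (cases a) (auto simp: lit_def)

lemma atoms_over_sub:
  "atoms_over V \<subseteq> (\<lambda>(P,v). AU P v) ` (UNIV \<times> V) \<union> (\<lambda>(f,u,v). AB f u v) ` (UNIV \<times> V \<times> V)"
proof
  fix a :: "('u,'b) atom" assume h: "a \<in> atoms_over V"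
  show "a \<in> (\<lambda>(P,v). AU P v) ` (UNIV \<times> V) \<union> (\<lambda>(f,u,v). AB f u v) ` (UNIV \<times> V \<times> V)"
  proof (cases a)
    case (AU P v) then show ?thesis using h
      by (auto simp: atoms_over_def intro!: rev_image_eqI[of "(P,v)"])
  next
    case (AB f u v) then show ?thesis using h
      by (auto simp: atoms_over_def intro!: rev_image_eqI[of "(f,u,v)"])
  qed
qed

lemma finite_atoms_over:
  assumes "finite V"
  shows "finite (atoms_over V :: ('u::finite,'b::finite) atom set)"
  apply (rule finite_subset[OF atoms_over_sub])
  using assms by (intro finite_UnI finite_imageI finite_cartesian_product) auto

lemma finite_atoms_x: "finite (atoms_x x xs :: ('u::finite,'b::finite) atom set)"
  unfolding atoms_x_def using finite_atoms_over[of "insert x (set xs)"] by (auto intro: rev_finite_subset)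

lemma sat_gccat:
  "sat e (gccat_fm xs P :: ('u::finite,'b::finite) fm) \<longleftrightarrow>
     distinct (map (env_asg e) xs) \<and> (\<forall>a\<in>atoms_over (set xs). holds e a \<longleftrightarrow> a \<in> P)"
proof -
  have fin: "finite ((\<lambda>a. lit a (a \<in> P)) ` atoms_over (set xs) :: ('u,'b) fm set)"
    using finite_atoms_over[of "set xs"] by (intro finite_imageI) simp
  have d: "(\<forall>i<length xs. \<forall>j<length xs. (i = j \<longrightarrow> env_asg e (xs!i) = env_asg e (xs!j))
        \<and> (i \<noteq> j \<longrightarrow> env_asg e (xs!i) \<noteq> env_asg e (xs!j))) \<longleftrightarrow> distinct (map (env_asg e) xs)"
    by (auto simp: distinct_conv_nth)
  show ?thesis
    unfolding gccat_fm_def using d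
    by (auto simp: sat_conj_set[OF fin] split: if_splits)
qed

lemma upd_simps[simp]:
  "env_asg (upd e x d) = (env_asg e)(x := d)" "env_U (upd e x d) = env_U e"
  "env_B (upd e x d) = env_B e" "env_dom (upd e x d) = env_dom e"
  by (simp_all add: upd_def)

lemma holds_upd_cong:
  assumes "avars a \<subseteq> V" "\<forall>v\<in>V. env_asg e v = env_asg e' v"
    "env_U e = env_U e'" "env_B e = env_B e'"
  shows "holds e a = holds e' a"
  using assms by (cases a) auto

lemma sat_ext:
  assumes "x \<notin> set xs" "T \<subseteq> atoms_x x xs"
  shows "sat (upd e x d) (ext_fm x xs T :: ('u::finite,'b::finite) fm) \<longleftrightarrow>
     d \<notin> env_asg e ` set xs \<and> (\<forall>a\<in>atoms_x x xs. holds (upd e x d) a \<longleftrightarrow> a \<in> T)"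
proof -
  have fin: "finite ((\<lambda>a. lit a (a \<in> T)) ` atoms_x x xs :: ('u,'b) fm set)"
    using finite_atoms_x[of x xs] by (intro finite_imageI) simp
  have 1: "(\<forall>f\<in>set (concat [[FNeg (FEq x xi), FNeg (FEq xi x)]. xi \<leftarrow> xs]). sat (upd e x d) (f :: ('u,'b) fm))
      \<longleftrightarrow> d \<notin> env_asg e ` set xs"
    using assms(1) by auto
  show ?thesis
    unfolding ext_fm_def using 1
    by (simp add: sat_conj_set[OF fin] del: set_concat)
qed

definition cnt_ok :: "nat \<Rightarrow> cval \<Rightarrow> bool" where
  "cnt_ok n c = (case c of Exactly k \<Rightarrow> n = k | AtLeast k \<Rightarrow> k \<le> n)"

lemma sat_cnt: "sat e (cnt_fm x c G) \<longleftrightarrow> cnt_ok (card {d\<in>env_dom e. sat (upd e x d) G}) c"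
  by (cases c) (auto simp: cnt_fm_def cnt_ok_def)

definition ecls :: "var \<Rightarrow> var list \<Rightarrow> ('d,'u,'b) env \<Rightarrow> ('u,'b) atom set \<Rightarrow> 'd set" where
  "ecls x xs e T = {d\<in>env_dom e. d \<notin> env_asg e ` set xs \<and> (\<forall>a\<in>atoms_x x xs. holds (upd e x d) a \<longleftrightarrow> a \<in> T)}"

lemma sat_cs_fm:
  fixes C :: "('u::finite,'b::finite) cstar"
  assumes "is_cstar C"
  shows "sat e (cs_fm C) \<longleftrightarrow> sat e (E_fm (cs_E C) (cs_xs C))
     \<and> distinct (map (env_asg e) (cs_xs C))
     \<and> (\<forall>a\<in>atoms_over (set (cs_xs C)). holds e a \<longleftrightarrow> a \<in> cs_F C)
     \<and> (\<forall>T\<in>ext_sets (cs_x C) (cs_xs C). cnt_ok (card (ecls (cs_x C) (cs_xs C) e T)) (cs_s C T))"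
proof -
  let ?x = "cs_x C" and ?xs = "cs_xs C"
  have xn: "?x \<notin> set ?xs" using assms by (simp add: is_cstar_def)
  have fin: "finite ((\<lambda>T. cnt_fm ?x (cs_s C T) (ext_fm ?x ?xs T)) ` ext_sets ?x ?xs :: ('u,'b) fm set)"
    using finite_atoms_x[of ?x ?xs] by (intro finite_imageI) (simp add: ext_sets_def)
  have c: "{d\<in>env_dom e. sat (upd e ?x d) (ext_fm ?x ?xs T :: ('u,'b) fm)} = ecls ?x ?xs e T"
    if "T \<in> ext_sets ?x ?xs" for T
    using sat_ext[OF xn, of T e] that by (auto simp: ecls_def ext_sets_def)
  show ?thesis
    unfolding cs_fm_def using c
    by (simp add: sat_conj_set[OF fin] sat_gccat sat_cnt)
qed

lemma sat_E_asg: "env_asg e = env_asg e' \<Longrightarrow> sat e (E_fm E xs) = sat e' (E_fm E xs)"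
  by (auto simp: E_fm_def)

datatype ('d,'u,'b) fact = FG "('u,'b) atom" | FL 'd "('u,'b) atom" | FM 'd nat

definition fo :: "('u,'b) atom set \<Rightarrow> nat set \<Rightarrow> 'd set \<Rightarrow> ('d,'u,'b) fact set" where
  "fo T m A = {FL d a | d a. d \<in> A \<and> a \<in> T} \<union> {FM d i | d i. d \<in> A \<and> i \<in> m}"

lemma fo_un1: "fo (T1 \<union> T2) (m1 \<union> m2) A = fo T1 m1 A \<union> fo T2 m2 A"
  by (auto simp: fo_def)
lemma fo_un2: "fo T m (A \<union> B) = fo T m A \<union> fo T m B"
  by (auto simp: fo_def)
lemma fo_empty[simp]: "fo T m {} = {}"
  by (auto simp: fo_def)
lemma fo_disj1: "T1 \<inter> T2 = {} \<Longrightarrow> m1 \<inter> m2 = {} \<Longrightarrow> fo T1 m1 A \<inter> fo T2 m2 B = {}"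
  by (auto simp: fo_def)
lemma fo_disj2: "A \<inter> B = {} \<Longrightarrow> fo T1 m1 A \<inter> fo T2 m2 B = {}"
  by (auto simp: fo_def)
lemma fo_mem[simp]:
  "FL d a \<in> fo T m A \<longleftrightarrow> d \<in> A \<and> a \<in> T"
  "FM d i \<in> fo T m A \<longleftrightarrow> d \<in> A \<and> i \<in> m"
  "FG g \<notin> fo T m A"
  by (auto simp: fo_def)

fun tsat :: "('u,'b) tok \<Rightarrow> ('d,'u,'b) fact set \<Rightarrow> bool" where
  "tsat (TK F) S = (S = FG ` F)"
| "tsat TFalse S = False"
| "tsat TGE S = (S = {})"
| "tsat (TOne m T) S = (\<exists>d. S = fo T m {d})"
| "tsat (TAny m T) S = (\<exists>A. S = fo T m A)"

inductive msat :: "('u,'b) tok multiset \<Rightarrow> ('d,'u,'b) fact set \<Rightarrow> bool" where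
  msat_empty: "msat {#} {}"
| msat_add: "tsat t S1 \<Longrightarrow> msat M S2 \<Longrightarrow> S1 \<inter> S2 = {} \<Longrightarrow> msat (add_mset t M) (S1 \<union> S2)"

lemma msat_plus_intro:
  "msat M S1 \<Longrightarrow> msat N SN \<Longrightarrow> S1 \<inter> SN = {} \<Longrightarrow> msat (M + N) (S1 \<union> SN)"
proof (induction M S1 rule: msat.induct)
  case msat_empty then show ?case by simp
next
  case (msat_add t S1 M S2)
  have "msat (M + N) (S2 \<union> SN)" using msat_add by auto
  then have "msat (add_mset t (M + N)) (S1 \<union> (S2 \<union> SN))"
    using msat_add by (intro msat.msat_add) auto
  then show ?case by (simp add: Un_assoc)
qed

lemma msat_empty_iff[simp]: "msat {#} S \<longleftrightarrow> S = {}"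
  by (auto elim: msat.cases intro: msat.intros)

lemma msat_remove:
  "msat N S \<Longrightarrow> t \<in># N \<Longrightarrow> \<exists>S1 S2. tsat t S1 \<and> msat (N - {#t#}) S2 \<and> S1 \<inter> S2 = {} \<and> S = S1 \<union> S2"
proof (induction N S rule: msat.induct)
  case msat_empty then show ?case by simp
next
  case (msat_add t' S1 M S2)
  show ?case
  proof (cases "t = t'")
    case True then show ?thesis using msat_add by auto
  next
    case False
    then have "t \<in># M" using msat_add by auto
    then obtain A B where AB: "tsat t A" "msat (M - {#t#}) B" "A \<inter> B = {}" "S2 = A \<union> B"
      using msat_add by blast
    have "msat (add_mset t' (M - {#t#})) (S1 \<union> B)"
      using AB msat_add by (intro msat.msat_add) auto
    moreover have "add_mset t' M - {#t#} = add_mset t' (M - {#t#})" using False by simp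
    ultimately show ?thesis using AB msat_add by (intro exI[of _ A] exI[of _ "S1 \<union> B"]) auto
  qed
qed

lemma msat_plus_elim:
  "msat (M + N) S \<Longrightarrow> \<exists>S1 S2. msat M S1 \<and> msat N S2 \<and> S1 \<inter> S2 = {} \<and> S = S1 \<union> S2"
proof (induction M arbitrary: S)
  case empty then show ?case by (intro exI[of _ "{}"] exI[of _ S]) auto
next
  case (add t M)
  then obtain A B where AB: "tsat t A" "msat (M + N) B" "A \<inter> B = {}" "S = A \<union> B"
    using msat_remove[of "add_mset t M + N" S t] by auto
  then obtain B1 B2 where B: "msat M B1" "msat N B2" "B1 \<inter> B2 = {}" "B = B1 \<union> B2"
    using add.IH by blast
  have "msat (add_mset t M) (A \<union> B1)" using AB B by (intro msat.msat_add) auto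
  then show ?case using AB B by (intro exI[of _ "A \<union> B1"] exI[of _ B2]) auto
qed

lemma msat_plus: "msat (M + N) S \<longleftrightarrow> (\<exists>S1 S2. msat M S1 \<and> msat N S2 \<and> S1 \<inter> S2 = {} \<and> S = S1 \<union> S2)"
  using msat_plus_elim msat_plus_intro by metis

lemma msat_single[simp]: "msat {#t#} S \<longleftrightarrow> tsat t S"
proof
  assume "msat {#t#} S"
  then show "tsat t S" using msat_remove[of "{#t#}" S t] by auto
next
  assume "tsat t S"
  then show "msat {#t#} S" using msat.msat_add[of t S "{#}" "{}"] by simp
qed

lemma msat_add_iff: "msat (add_mset t M) S \<longleftrightarrow> (\<exists>S1 S2. tsat t S1 \<and> msat M S2 \<and> S1 \<inter> S2 = {} \<and> S = S1 \<union> S2)"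
  using msat_plus[of "{#t#}" M S] by simp

lemma msat_cong:
  fixes L L' Z :: "('u,'b) tok multiset"
  assumes "\<And>S::('d,'u,'b) fact set. msat L S \<Longrightarrow> msat L' S"
  shows "msat (L + Z) (S::('d,'u,'b) fact set) \<Longrightarrow> msat (L' + Z) S"
proof -
  assume "msat (L + Z) S"
  then obtain S1 S2 where "msat L S1" "msat Z S2" "S1 \<inter> S2 = {}" "S = S1 \<union> S2"
    using msat_plus_elim by blast
  moreover have "msat L' S1" using assms \<open>msat L S1\<close> by blast
  ultimately show ?thesis using msat_plus_intro[of L' S1 Z S2] by simp
qed

lemma msat_two: "msat {#t1, t2#} S \<longleftrightarrow> (\<exists>S1 S2. tsat t1 S1 \<and> tsat t2 S2 \<and> S1 \<inter> S2 = {} \<and> S = S1 \<union> S2)"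
  by (simp add: msat_add_iff)

lemma msat_three: "msat {#t1, t2, t3#} S \<longleftrightarrow> (\<exists>S1 S2 S3. tsat t1 S1 \<and> tsat t2 S2 \<and> tsat t3 S3
   \<and> S1 \<inter> S2 = {} \<and> S1 \<inter> S3 = {} \<and> S2 \<inter> S3 = {} \<and> S = S1 \<union> S2 \<union> S3)"
proof
  assume "msat {#t1, t2, t3#} S"
  then obtain S1 S2 S1a S2a where "tsat t1 S1" "S1 \<inter> S2 = {}" "S = S1 \<union> S2" "tsat t2 S1a" "tsat t3 S2a"
    "S1a \<inter> S2a = {}" "S2 = S1a \<union> S2a"
    by (auto simp: msat_add_iff)
  then show "\<exists>S1 S2 S3. tsat t1 S1 \<and> tsat t2 S2 \<and> tsat t3 S3
   \<and> S1 \<inter> S2 = {} \<and> S1 \<inter> S3 = {} \<and> S2 \<inter> S3 = {} \<and> S = S1 \<union> S2 \<union> S3"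
    by (intro exI[of _ S1] exI[of _ S1a] exI[of _ S2a]) auto
next
  assume "\<exists>S1 S2 S3. tsat t1 S1 \<and> tsat t2 S2 \<and> tsat t3 S3
   \<and> S1 \<inter> S2 = {} \<and> S1 \<inter> S3 = {} \<and> S2 \<inter> S3 = {} \<and> S = S1 \<union> S2 \<union> S3"
  then obtain S1 S2 S3 where h: "tsat t1 S1" "tsat t2 S2" "tsat t3 S3"
   "S1 \<inter> S2 = {}" "S1 \<inter> S3 = {}" "S2 \<inter> S3 = {}" "S = S1 \<union> S2 \<union> S3" by blast
  have "msat {#t2, t3#} (S2 \<union> S3)" using h msat_add[of t2 S2 "{#t3#}" S3] by auto
  then show "msat {#t1, t2, t3#} S" unfolding msat_add_iff[of t1]
    using h by (intro exI[of _ S1] exI[of _ "S2 \<union> S3"]) auto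
qed

lemma msat_two_intro: "tsat t1 S1 \<Longrightarrow> tsat t2 S2 \<Longrightarrow> S1 \<inter> S2 = {} \<Longrightarrow> msat {#t1, t2#} (S1 \<union> S2)"
  using msat_add[of t1 S1 "{#t2#}" S2] by auto

lemma tsat_intro: "tsat (TOne m T) (fo T m {d})" "tsat (TAny m T) (fo T m A)"
  by auto

lemma fo12: "fo (T1 \<union> T2) {1,2} A = fo T1 {1} A \<union> fo T2 {2} A"
  by (auto simp: fo_def)
lemma disj12: "T1 \<inter> T2 = {} \<Longrightarrow> fo T1 {1} A \<inter> fo T2 {2} B = {}"
  by (auto simp: fo_def)

lemma rules14_back:
  fixes S :: "('d,'u,'b) fact set"
  assumes "rules14 L Rh" "msat Rh S"
  shows "msat L S"
proof -
  obtain T1 T2 where d: "T1 \<inter> T2 = {}" and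
    c: "(L = {#TOne {1} T1, TOne {2} T2#} \<and> Rh = {#TOne {1,2} (T1 \<union> T2)#})
    \<or> (L = {#TOne {1} T1, TAny {2} T2#} \<and> Rh = {#TOne {1,2} (T1 \<union> T2), TAny {2} T2#})
    \<or> (L = {#TAny {1} T1, TOne {2} T2#} \<and> Rh = {#TAny {1} T1, TOne {1,2} (T1 \<union> T2)#})
    \<or> (L = {#TAny {1} T1, TAny {2} T2#}
         \<and> Rh = {#TAny {1} T1, TAny {2} T2, TAny {1,2} (T1 \<union> T2)#})"
    using assms(1) unfolding rules14_def by blast
  have D: "fo T1 {1} A \<inter> fo T2 {2} B = {}" for A B :: "'d set" using disj12[OF d] .
  from c show ?thesis
  proof (elim disjE conjE)
    assume L: "L = {#TOne {1} T1, TOne {2} T2#}" and R: "Rh = {#TOne {1,2} (T1 \<union> T2)#}"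
    then obtain d0 where "S = fo (T1 \<union> T2) {1,2} {d0}" using assms(2) by auto
    then show ?thesis unfolding L fo12 using D by (auto intro!: msat_two_intro)
  next
    assume L: "L = {#TOne {1} T1, TAny {2} T2#}" and R: "Rh = {#TOne {1,2} (T1 \<union> T2), TAny {2} T2#}"
    then obtain d0 A where "S = fo (T1 \<union> T2) {1,2} {d0} \<union> fo T2 {2} A" using assms(2) R
      by (auto simp: msat_two)
    then have "S = fo T1 {1} {d0} \<union> fo T2 {2} ({d0} \<union> A)" by (auto simp: fo_def)
    then show ?thesis unfolding L using D by (auto intro!: msat_two_intro)
  next
    assume L: "L = {#TAny {1} T1, TOne {2} T2#}" and R: "Rh = {#TAny {1} T1, TOne {1,2} (T1 \<union> T2)#}"
    then obtain d0 A where "S = fo T1 {1} A \<union> fo (T1 \<union> T2) {1,2} {d0}" using assms(2) R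
      by (auto simp: msat_two)
    then have "S = fo T1 {1} (A \<union> {d0}) \<union> fo T2 {2} {d0}" by (auto simp: fo_def)
    then show ?thesis unfolding L using D by (auto intro!: msat_two_intro)
  next
    assume L: "L = {#TAny {1} T1, TAny {2} T2#}"
      and R: "Rh = {#TAny {1} T1, TAny {2} T2, TAny {1,2} (T1 \<union> T2)#}"
    then obtain A1 A2 A3 where "S = fo T1 {1} A1 \<union> fo T2 {2} A2 \<union> fo (T1 \<union> T2) {1,2} A3"
      using assms(2) R by (auto simp: msat_three)
    then have "S = fo T1 {1} (A1 \<union> A3) \<union> fo T2 {2} (A2 \<union> A3)" by (auto simp: fo_def)
    then show ?thesis unfolding L using D by (auto intro!: msat_two_intro)
  qed
qed

lemma fo_ex_empty[simp]: "\<exists>A. {} = fo T m A"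
  by (rule exI[of _ "{}"]) simp

lemma rules56_back:
  assumes "rules56 L Rh" "msat Rh S"
  shows "msat L S"
proof -
  obtain T where "L = {#TAny {1} T#} \<or> L = {#TAny {2} T#}" "Rh = {#TGE#}"
    using assms(1) unfolding rules56_def by blast
  moreover have "S = {}" using assms(2) calculation by simp
  ultimately show ?thesis by auto
qed

lemma apply_back:
  fixes R :: "('u,'b) tok multiset \<Rightarrow> ('u,'b) tok multiset \<Rightarrow> bool"
  assumes "\<And>L Rh (S::('d,'u,'b) fact set). R L Rh \<Longrightarrow> msat Rh S \<Longrightarrow> msat L S"
    "apply_rule R M M'" "msat M' (S::('d,'u,'b) fact set)"
  shows "msat M S"
proof -
  obtain L Rh Z where "R L Rh" "M = L + Z" "M' = Rh + Z" using assms(2) unfolding apply_rule_def by blast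
  then show ?thesis using assms(1,3) msat_cong[of Rh L Z S] by auto
qed

lemma any_any: "msat {#TAny m T, TAny m T#} S \<longleftrightarrow> msat {#TAny m T#} S"
proof
  assume "msat {#TAny m T, TAny m T#} S"
  then obtain A B where "S = fo T m A \<union> fo T m B" unfolding msat_two by auto
  then show "msat {#TAny m T#} S" by (auto simp: fo_un2[symmetric])
next
  assume "msat {#TAny m T#} S"
  then obtain A where "S = fo T m A" by auto
  have "msat {#TAny m T, TAny m T#} (fo T m A \<union> fo T m {})"
    by (rule msat_two_intro[OF tsat_intro(2) tsat_intro(2)]) simp
  then show "msat {#TAny m T, TAny m T#} S" using \<open>S = fo T m A\<close> by simp
qed

lemma ident_iff:
  assumes "ident M M'"
  shows "msat M S \<longleftrightarrow> msat M' S"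
proof -
  have ge: "msat (R + {#TGE#}) S \<longleftrightarrow> msat R S" for R
    by (simp add: msat_add_iff)
  have aa: "msat (R + {#TAny m T, TAny m T#}) S \<longleftrightarrow> msat (R + {#TAny m T#}) S" for R m T
  proof -
    have "msat ({#TAny m T, TAny m T#} + R) S \<longleftrightarrow> msat ({#TAny m T#} + R) S"
      using msat_cong[of "{#TAny m T, TAny m T#}" "{#TAny m T#}" R S]
        msat_cong[of "{#TAny m T#}" "{#TAny m T, TAny m T#}" R S] any_any[of m T]
      by blast
    then show ?thesis by (simp only: add.commute[of R])
  qed
  from assms[unfolded ident_def] show ?thesis
  proof (elim disjE exE conjE)
    fix R assume "M = R + {#TGE#}" "M' = R" then show ?thesis using ge by simp
  next
    fix R assume "M = R" "M' = R + {#TGE#}" then show ?thesis using ge by simp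
  next
    fix R m T assume "M = R + {#TAny m T, TAny m T#}" "M' = R + {#TAny m T#}"
    then show ?thesis using aa by simp
  next
    fix R m T assume "M = R + {#TAny m T#}" "M' = R + {#TAny m T, TAny m T#}"
    then show ?thesis using aa by simp
  qed
qed

lemma ident_rtc: "ident\<^sup>*\<^sup>* M M' \<Longrightarrow> msat M S \<Longrightarrow> msat M' S"
proof (induction rule: rtranclp_induct)
  case base then show ?case .
next
  case (step y z) then show ?case using ident_iff[of y z S] by blast
qed

lemma phase1_back:
  fixes S :: "('d,'u,'b) fact set"
  shows "phase1 M M' \<Longrightarrow> msat M' S \<Longrightarrow> msat M S"
  unfolding phase1_def
proof (induction rule: rtranclp_induct)
  case base then show ?case .
next
  case (step y z)
  have h: "apply_rule rules14 y z \<or> ident y z" using step.hyps(2) by simp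
  have "msat y S"
  proof (cases "ident y z")
    case True then show ?thesis using ident_iff[of y z S] step.prems by blast
  next
    case False then have "apply_rule rules14 y z" using h by blast
    have r: "\<And>L Rh (S::('d,'u,'b) fact set). rules14 L Rh \<Longrightarrow> msat Rh S \<Longrightarrow> msat L S"
      by (rule rules14_back)
    show ?thesis by (rule apply_back[OF r \<open>apply_rule rules14 y z\<close> step.prems])
  qed
  then show ?case using step.IH by blast
qed

lemma phase2_back:
  fixes S :: "('d,'u,'b) fact set"
  shows "phase2 M M' \<Longrightarrow> msat M' S \<Longrightarrow> msat M S"
  unfolding phase2_def
proof (induction rule: rtranclp_induct)
  case base then show ?case .
next
  case (step y z)
  have h: "apply_rule rules56 y z \<or> ident y z" using step.hyps(2) by simp
  have "msat y S"
  proof (cases "ident y z")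
    case True then show ?thesis using ident_iff[of y z S] step.prems by blast
  next
    case False then have "apply_rule rules56 y z" using h by blast
    have r: "\<And>L Rh (S::('d,'u,'b) fact set). rules56 L Rh \<Longrightarrow> msat Rh S \<Longrightarrow> msat L S"
      by (rule rules56_back)
    show ?thesis by (rule apply_back[OF r \<open>apply_rule rules56 y z\<close> step.prems])
  qed
  then show ?case using step.IH by blast
qed

lemma msat_sum_intro:
  assumes "finite A"
  shows "(\<forall>T\<in>A. msat (f T) (P T)) \<Longrightarrow> (\<forall>T\<in>A. \<forall>T'\<in>A. T \<noteq> T' \<longrightarrow> P T \<inter> P T' = {})
     \<Longrightarrow> msat (\<Sum>T\<in>A. f T) (\<Union>T\<in>A. P T)"
  using assms
proof (induction A rule: finite_induct)
  case empty then show ?case by simp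
next
  case (insert x F)
  have "msat (f x + (\<Sum>T\<in>F. f T)) (P x \<union> (\<Union>T\<in>F. P T))"
    using insert by (intro msat_plus_intro) auto
  then show ?case using insert by simp
qed

lemma msat_sum_elim:
  assumes "finite A"
  shows "msat (\<Sum>T\<in>A. f T) S \<Longrightarrow> \<exists>P. S = (\<Union>T\<in>A. P T) \<and> (\<forall>T\<in>A. msat (f T) (P T))
     \<and> (\<forall>T\<in>A. \<forall>T'\<in>A. T \<noteq> T' \<longrightarrow> P T \<inter> P T' = {})"
  using assms
proof (induction A arbitrary: S rule: finite_induct)
  case empty then show ?case by (intro exI[of _ "\<lambda>_. {}"]) simp
next
  case (insert x F)
  then have "msat (f x + (\<Sum>T\<in>F. f T)) S" by simp
  from msat_plus_elim[OF this] obtain S1 S2 where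
    S: "msat (f x) S1" "msat (\<Sum>T\<in>F. f T) S2" "S1 \<inter> S2 = {}" "S = S1 \<union> S2"
    by blast
  from insert.IH[OF S(2)] obtain P where P: "S2 = (\<Union>T\<in>F. P T)" "\<forall>T\<in>F. msat (f T) (P T)"
     "\<forall>T\<in>F. \<forall>T'\<in>F. T \<noteq> T' \<longrightarrow> P T \<inter> P T' = {}"
    by blast
  let ?P = "P(x := S1)"
  have sub: "\<forall>T\<in>F. P T \<subseteq> S2" using P(1) by blast
  have eq: "(\<Union>T\<in>F. ?P T) = (\<Union>T\<in>F. P T)" using insert.hyps(2) by (intro SUP_cong) auto
  have "S = (\<Union>T\<in>insert x F. ?P T)" unfolding UN_insert fun_upd_same eq using S(4) P(1) by simp
  moreover have "\<forall>T\<in>insert x F. msat (f T) (?P T)" using S(1) P(2) insert.hyps(2) by auto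
  moreover have "\<forall>T\<in>insert x F. \<forall>T'\<in>insert x F. T \<noteq> T' \<longrightarrow> ?P T \<inter> ?P T' = {}"
  proof (intro ballI impI)
    fix T T' assume "T \<in> insert x F" "T' \<in> insert x F" "T \<noteq> T'"
    then consider "T = x" "T' \<in> F" | "T' = x" "T \<in> F" | "T \<in> F" "T' \<in> F" by blast
    then show "?P T \<inter> ?P T' = {}"
    proof cases
      case 1
      then have "T' \<noteq> x" using insert.hyps(2) by blast
      then have "?P T' = P T'" by simp
      moreover have "?P T = S1" using 1 by simp
      moreover have "P T' \<subseteq> S2" using sub 1 by blast
      ultimately show ?thesis using S(3) by blast
    next
      case 2
      then have "T \<noteq> x" using insert.hyps(2) by blast
      then have "?P T = P T" by simp
      moreover have "?P T' = S1" using 2 by simp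
      moreover have "P T \<subseteq> S2" using sub 2 by blast
      ultimately show ?thesis using S(3) by blast
    next
      case 3 then show ?thesis using P(3) \<open>T \<noteq> T'\<close> insert.hyps(2) by (metis fun_upd_other)
    qed
  qed
  ultimately show ?case by (intro exI[of _ ?P]) simp
qed

lemma rep_intro:
  assumes "finite A"
  shows "msat (replicate_mset (card A) (TOne m T)) (fo T m A)"
  using assms
proof (induction A rule: finite_induct)
  case empty then show ?case by simp
next
  case (insert x F)
  have "fo T m (insert x F) = fo T m {x} \<union> fo T m F" using fo_un2[of T m "{x}" F] by simp
  moreover have "fo T m {x} \<inter> fo T m F = {}" using insert by (intro fo_disj2) auto
  ultimately show ?case using insert msat_add[of "TOne m T" "fo T m {x}" _ "fo T m F"]
    by (auto simp del: tsat.simps intro: tsat_intro)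
qed

lemma rep_elim:
  "msat (replicate_mset k (TOne {i} T)) Q \<Longrightarrow> \<exists>A. Q = fo T {i} A \<and> finite A \<and> card A = k"
proof (induction k arbitrary: Q)
  case 0 then show ?case by (intro exI[of _ "{}"]) simp
next
  case (Suc k)
  then obtain S1 S2 where S: "tsat (TOne {i} T) S1" "msat (replicate_mset k (TOne {i} T)) S2"
     "S1 \<inter> S2 = {}" "Q = S1 \<union> S2"
    by (auto simp: msat_add_iff)
  then obtain d where d: "S1 = fo T {i} {d}" by auto
  obtain A where A: "S2 = fo T {i} A" "finite A" "card A = k" using Suc.IH S by blast
  have "d \<notin> A"
  proof
    assume "d \<in> A" then have "FM d i \<in> S1 \<inter> S2" using d A by simp
    then show False using S by simp
  qed
  then show ?case using d A S by (intro exI[of _ "insert d A"]) (auto simp: fo_un2[of T "{i}" "{d}" A, simplified])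
qed

definition crel :: "'d set \<Rightarrow> cval \<Rightarrow> bool" where
  "crel A c = (case c of Exactly k \<Rightarrow> finite A \<and> card A = k | AtLeast p \<Rightarrow> (\<exists>A0\<subseteq>A. finite A0 \<and> card A0 = p))"

lemma crel_cnt: "finite A \<Longrightarrow> crel A c \<Longrightarrow> cnt_ok (card A) c"
  by (cases c) (auto simp: crel_def cnt_ok_def intro: card_mono)

lemma X_intro:
  assumes "finite A" "cnt_ok (card A) c"
  shows "msat (X_tok m T c) (fo T m A)"
proof (cases c)
  case (Exactly k)
  then have "msat (replicate_mset k (TOne m T) + {#TGE#}) (fo T m A \<union> {})"
    using assms rep_intro[OF assms(1), of m T] by (intro msat_plus_intro) (auto simp: cnt_ok_def)
  then show ?thesis using Exactly by (simp add: X_tok_def X_exact_def)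
next
  case (AtLeast p)
  then have "p \<le> card A" using assms by (simp add: cnt_ok_def)
  then obtain B where B: "B \<subseteq> A" "card B = p" using obtain_subset_with_card_n by metis
  have fB: "finite B" using B assms rev_finite_subset by blast
  have "msat (replicate_mset p (TOne m T) + {#TGE#}) (fo T m B \<union> {})"
    using rep_intro[OF fB, of m T] B by (intro msat_plus_intro) auto
  moreover have "msat {#TAny m T#} (fo T m (A - B))" by (simp only: msat_single tsat_intro)
  moreover have "(fo T m B \<union> {}) \<inter> fo T m (A - B) = {}" by (simp add: fo_disj2)
  ultimately have "msat (replicate_mset p (TOne m T) + {#TGE#} + {#TAny m T#}) (fo T m B \<union> {} \<union> fo T m (A - B))"
    by (rule msat_plus_intro)
  moreover have "fo T m B \<union> {} \<union> fo T m (A - B) = fo T m A"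
    using B by (auto simp: fo_def)
  ultimately show ?thesis using AtLeast by (simp add: X_tok_def X_exact_def)
qed

lemma X_elim:
  assumes "msat (X_tok {i} T c) Q"
  shows "\<exists>A. Q = fo T {i} A \<and> crel A c"
proof (cases c)
  case (Exactly k)
  then have "msat (replicate_mset k (TOne {i} T) + {#TGE#}) Q" using assms by (simp add: X_tok_def X_exact_def)
  then obtain S1 S2 where "msat (replicate_mset k (TOne {i} T)) S1" "msat {#TGE#} S2" "Q = S1 \<union> S2"
    using msat_plus_elim by blast
  then show ?thesis using rep_elim[of k i T S1] Exactly by (auto simp: crel_def)
next
  case (AtLeast p)
  then have "msat (replicate_mset p (TOne {i} T) + {#TGE#} + {#TAny {i} T#}) Q"
    using assms by (simp add: X_tok_def X_exact_def)
  then obtain S1 S2 S3 where "msat (replicate_mset p (TOne {i} T)) S1" "msat {#TGE#} S2" "Q = S1 \<union> S2 \<union> S3"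
     "msat {#TAny {i} T#} S3"
    using msat_plus_elim by metis
  then obtain A B where "S1 = fo T {i} A" "finite A" "card A = p" "S3 = fo T {i} B"
    using rep_elim[of p i T S1] by auto
  then show ?thesis using \<open>Q = S1 \<union> S2 \<union> S3\<close> \<open>msat {#TGE#} S2\<close> AtLeast
    by (intro exI[of _ "A \<union> B"]) (auto simp: crel_def fo_un2)
qed

definition Dset :: "var list \<Rightarrow> ('d,'u,'b) env \<Rightarrow> 'd set" where
  "Dset xs e = env_dom e - env_asg e ` set xs"

definition facts :: "var \<Rightarrow> var list \<Rightarrow> ('d,'u,'b) env \<Rightarrow> ('d,'u,'b) fact set" where
  "facts x xs e = {FG a | a. a \<in> atoms_over (set xs) \<and> holds e a}
     \<union> {FL d a | d a. d \<in> Dset xs e \<and> a \<in> atoms_x x xs \<and> holds (upd e x d) a}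
     \<union> {FM d i | d i. d \<in> Dset xs e \<and> i \<in> {1,2}}"

lemma facts_mem[simp]:
  "FG a \<in> facts x xs e \<longleftrightarrow> a \<in> atoms_over (set xs) \<and> holds e a"
  "FL d a \<in> facts x xs e \<longleftrightarrow> d \<in> Dset xs e \<and> a \<in> atoms_x x xs \<and> holds (upd e x d) a"
  "FM d i \<in> facts x xs e \<longleftrightarrow> d \<in> Dset xs e \<and> i \<in> {1,2}"
  by (auto simp: facts_def)

lemma ecls_disj:
  assumes "T \<subseteq> atoms_x x xs" "T' \<subseteq> atoms_x x xs" "T \<noteq> T'"
  shows "ecls x xs e T \<inter> ecls x xs e T' = {}"
  using assms by (auto simp: ecls_def)

lemma part_A:
  fixes C :: "('u::finite,'b::finite) cstar" and e :: "('d,'u,'b) env"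
  assumes cs: "is_cstar C" and wf: "wf_env e" and s: "sat e (cs_fm C)"
  shows "msat (S_tok {1,2} C) (facts (cs_x C) (cs_xs C) e)"
proof -
  let ?x = "cs_x C" and ?xs = "cs_xs C" and ?F = "cs_F C"
  let ?EX = "ext_sets ?x ?xs :: (('u,'b) atom set) set"
  have Fsub: "?F \<subseteq> atoms_over (set ?xs)" using cs by (auto simp: is_cstar_def gccat_sets_def)
  have sc: "sat e (E_fm (cs_E C) ?xs)" "distinct (map (env_asg e) ?xs)"
     "\<forall>a\<in>atoms_over (set ?xs). holds e a \<longleftrightarrow> a \<in> ?F"
     "\<forall>T\<in>?EX. cnt_ok (card (ecls ?x ?xs e T)) (cs_s C T)"
    using s sat_cs_fm[OF cs] by auto
  have finEX: "finite ?EX" by (simp add: ext_sets_def finite_atoms_x)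
  have findom: "finite (env_dom e)" using wf by (simp add: wf_env_def)
  have eq: "facts ?x ?xs e = FG ` ?F \<union> (\<Union>T\<in>?EX. fo T {1,2} (ecls ?x ?xs e T))"
  proof (rule set_eqI)
    fix z :: "('d,'u,'b) fact"
    show "z \<in> facts ?x ?xs e \<longleftrightarrow> z \<in> FG ` ?F \<union> (\<Union>T\<in>?EX. fo T {1,2} (ecls ?x ?xs e T))"
    proof (cases z)
      case (FG a) then show ?thesis using sc(3) Fsub by auto
    next
      case (FL d a)
      let ?T = "{a\<in>atoms_x ?x ?xs. holds (upd e ?x d) a}"
      have TE: "?T \<in> ?EX" by (auto simp: ext_sets_def)
      have r: "z \<in> (\<Union>T\<in>?EX. fo T {1,2} (ecls ?x ?xs e T))" if "z \<in> facts ?x ?xs e"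
      proof -
        have "z \<in> fo ?T {1,2} (ecls ?x ?xs e ?T)" using that FL by (auto simp: ecls_def Dset_def)
        then show ?thesis using TE by blast
      qed
      have l: "z \<in> facts ?x ?xs e" if "z \<in> (\<Union>T\<in>?EX. fo T {1,2} (ecls ?x ?xs e T))"
        using that FL by (auto simp: ecls_def Dset_def ext_sets_def)
      show ?thesis using r l FL by blast
    next
      case (FM d i)
      let ?T = "{a\<in>atoms_x ?x ?xs. holds (upd e ?x d) a}"
      have TE: "?T \<in> ?EX" by (auto simp: ext_sets_def)
      have r: "z \<in> (\<Union>T\<in>?EX. fo T {1,2} (ecls ?x ?xs e T))" if "z \<in> facts ?x ?xs e"
      proof -
        have "z \<in> fo ?T {1,2} (ecls ?x ?xs e ?T)" using that FM by (auto simp: ecls_def Dset_def)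
        then show ?thesis using TE by blast
      qed
      have l: "z \<in> facts ?x ?xs e" if "z \<in> (\<Union>T\<in>?EX. fo T {1,2} (ecls ?x ?xs e T))"
        using that FM by (auto simp: ecls_def Dset_def ext_sets_def)
      show ?thesis using r l FM by auto
    qed
  qed
  have m1: "msat {#TK ?F#} (FG ` ?F :: ('d,'u,'b) fact set)" by simp
  have m2: "msat (\<Sum>T\<in>?EX. X_tok {1,2} T (cs_s C T)) (\<Union>T\<in>?EX. fo T {1,2} (ecls ?x ?xs e T))"
  proof (rule msat_sum_intro[OF finEX])
    show "\<forall>T\<in>?EX. msat (X_tok {1,2} T (cs_s C T)) (fo T {1,2} (ecls ?x ?xs e T))"
    proof
      fix T assume "T \<in> ?EX"
      moreover have "finite (ecls ?x ?xs e T)" using findom by (auto simp: ecls_def)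
      ultimately show "msat (X_tok {1,2} T (cs_s C T)) (fo T {1,2} (ecls ?x ?xs e T))"
        using sc(4) by (intro X_intro) auto
    qed
    show "\<forall>T\<in>?EX. \<forall>T'\<in>?EX. T \<noteq> T' \<longrightarrow> fo T {1,2} (ecls ?x ?xs e T) \<inter> fo T' {1,2} (ecls ?x ?xs e T') = {}"
    proof (intro ballI impI)
      fix T T' assume h: "T \<in> ?EX" "T' \<in> ?EX" "T \<noteq> T'"
      have "ecls ?x ?xs e T \<inter> ecls ?x ?xs e T' = {}"
        by (rule ecls_disj) (use h in \<open>auto simp: ext_sets_def\<close>)
      then show "fo T {1,2} (ecls ?x ?xs e T) \<inter> fo T' {1,2} (ecls ?x ?xs e T') = {}"
        by (rule fo_disj2)
    qed
  qed
  have "msat ({#TK ?F#} + (\<Sum>T\<in>?EX. X_tok {1,2} T (cs_s C T))) (FG ` ?F \<union> (\<Union>T\<in>?EX. fo T {1,2} (ecls ?x ?xs e T)))"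
    by (rule msat_plus_intro[OF m1 m2]) auto
  then show ?thesis unfolding eq S_tok_def .
qed

lemma W0_back:
  assumes "msat (W0 C1 C2) S"
  shows "msat (S_tok {1} C1 + S_tok {2} C2) S"
proof -
  let ?X1 = "\<Sum>T\<in>ext_sets (cs_x C1) (cs_xs C1). X_tok {1} T (cs_s C1 T)"
  let ?X2 = "\<Sum>T\<in>ext_sets (cs_x C2) (cs_xs C2). X_tok {2} T (cs_s C2 T)"
  let ?F1 = "cs_F C1" and ?F2 = "cs_F C2"
  have N: "S_tok {1} C1 + S_tok {2} C2 = (?X1 + ?X2) + {#TK ?F1, TK ?F2#}"
    by (simp add: S_tok_def)
  have W: "W0 C1 C2 = (?X1 + ?X2) + {#if ?F1 \<inter> ?F2 = {} then TK (?F1 \<union> ?F2) else TFalse#}"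
    unfolding W0_def N by simp
  from msat_plus_elim[OF assms[unfolded W]] obtain Sa Sb where S0: "msat (?X1 + ?X2) Sa"
    "msat {#if ?F1 \<inter> ?F2 = {} then TK (?F1 \<union> ?F2) else TFalse#} Sb" "Sa \<inter> Sb = {}" "S = Sa \<union> Sb"
    by blast
  have S: "msat (?X1 + ?X2) Sa"
    "tsat (if ?F1 \<inter> ?F2 = {} then TK (?F1 \<union> ?F2) else TFalse) Sb" "Sa \<inter> Sb = {}" "S = Sa \<union> Sb"
    using S0 by (simp_all only: msat_single)
  then have d: "?F1 \<inter> ?F2 = {}" by (cases "?F1 \<inter> ?F2 = {}") auto
  then have Sb: "Sb = FG ` ?F1 \<union> FG ` ?F2" using S(2) by auto
  have "msat {#TK ?F1, TK ?F2#} (FG ` ?F1 \<union> FG ` ?F2)"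
    by (rule msat_two_intro) (use d in auto)
  then have "msat ((?X1 + ?X2) + {#TK ?F1, TK ?F2#}) (Sa \<union> Sb)"
    using S Sb by (intro msat_plus_intro) auto
  then show ?thesis using N S(4) by simp
qed

lemma S_tok_elim:
  fixes C :: "('u,'b) cstar" and S :: "('d,'u,'b) fact set"
  assumes "finite (ext_sets (cs_x C) (cs_xs C) :: ('u,'b) atom set set)"
    "msat (S_tok {i} C) S"
  shows "\<exists>A. S = FG ` cs_F C \<union> (\<Union>T\<in>ext_sets (cs_x C) (cs_xs C). fo T {i} (A T))
     \<and> (\<forall>T\<in>ext_sets (cs_x C) (cs_xs C). crel (A T) (cs_s C T))
     \<and> (\<forall>T\<in>ext_sets (cs_x C) (cs_xs C). \<forall>T'\<in>ext_sets (cs_x C) (cs_xs C). T \<noteq> T' \<longrightarrow> A T \<inter> A T' = {})"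
proof -
  let ?EX = "ext_sets (cs_x C) (cs_xs C) :: ('u,'b) atom set set"
  from msat_plus_elim[OF assms(2)[unfolded S_tok_def]]
  obtain Sa Sb where S: "msat {#TK (cs_F C)#} Sa" "msat (\<Sum>T\<in>?EX. X_tok {i} T (cs_s C T)) Sb" "S = Sa \<union> Sb"
    by blast
  have Sa: "Sa = FG ` cs_F C" using S(1) by simp
  from msat_sum_elim[OF assms(1) S(2)] obtain P where P: "Sb = (\<Union>T\<in>?EX. P T)"
    "\<forall>T\<in>?EX. msat (X_tok {i} T (cs_s C T)) (P T)" "\<forall>T\<in>?EX. \<forall>T'\<in>?EX. T \<noteq> T' \<longrightarrow> P T \<inter> P T' = {}"
    by blast
  have "\<forall>T\<in>?EX. \<exists>A. P T = fo T {i} A \<and> crel A (cs_s C T)"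
  proof
    fix T assume "T \<in> ?EX"
    then have "msat (X_tok {i} T (cs_s C T)) (P T)" using P(2) by blast
    then show "\<exists>A. P T = fo T {i} A \<and> crel A (cs_s C T)" by (rule X_elim)
  qed
  from bchoice[OF this] obtain A where A: "\<forall>T\<in>?EX. P T = fo T {i} (A T) \<and> crel (A T) (cs_s C T)"
    by blast
  have "(\<Union>T\<in>?EX. P T) = (\<Union>T\<in>?EX. fo T {i} (A T))"
    using A by (intro SUP_cong) auto
  then have "S = FG ` cs_F C \<union> (\<Union>T\<in>?EX. fo T {i} (A T))"
    using S(3) Sa P(1) by simp
  moreover have "\<forall>T\<in>?EX. \<forall>T'\<in>?EX. T \<noteq> T' \<longrightarrow> A T \<inter> A T' = {}"
  proof (intro ballI impI)
    fix T T' assume h: "T \<in> ?EX" "T' \<in> ?EX" "T \<noteq> T'"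
    show "A T \<inter> A T' = {}"
    proof (rule ccontr)
      assume "A T \<inter> A T' \<noteq> {}"
      then obtain d where "d \<in> A T" "d \<in> A T'" by blast
      then have "FM d i \<in> P T \<inter> P T'" using A h by simp
      then show False using P(3) h by blast
    qed
  qed
  moreover have "\<forall>T\<in>?EX. crel (A T) (cs_s C T)" using A by blast
  ultimately show ?thesis by (intro exI[of _ A]) blast
qed

definition relU :: "var \<Rightarrow> var list \<Rightarrow> ('d,'u,'b) env \<Rightarrow> ('d,'u,'b) fact set \<Rightarrow> 'u \<Rightarrow> 'd \<Rightarrow> bool" where
  "relU x xs e S P v \<longleftrightarrow> (\<exists>u\<in>set xs. v = env_asg e u \<and> FG (AU P u) \<in> S)
     \<or> (v \<notin> env_asg e ` set xs \<and> FL v (AU P x) \<in> S)"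

definition relB :: "var \<Rightarrow> var list \<Rightarrow> ('d,'u,'b) env \<Rightarrow> ('d,'u,'b) fact set \<Rightarrow> 'b \<Rightarrow> 'd \<Rightarrow> 'd \<Rightarrow> bool" where
  "relB x xs e S f v w \<longleftrightarrow>
     (\<exists>u\<in>set xs. \<exists>u'\<in>set xs. v = env_asg e u \<and> w = env_asg e u' \<and> FG (AB f u u') \<in> S)
   \<or> (v \<notin> env_asg e ` set xs \<and> (\<exists>u'\<in>set xs. w = env_asg e u' \<and> FL v (AB f x u') \<in> S))
   \<or> (w \<notin> env_asg e ` set xs \<and> (\<exists>u\<in>set xs. v = env_asg e u \<and> FL w (AB f u x) \<in> S))
   \<or> (v \<notin> env_asg e ` set xs \<and> v = w \<and> FL v (AB f x x) \<in> S)"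

definition junk :: "var list \<Rightarrow> ('d,'u,'b) env \<Rightarrow> 'd \<Rightarrow> 'd \<Rightarrow> bool" where
  "junk xs e v w \<longleftrightarrow> v \<notin> env_asg e ` set xs \<and> w \<notin> env_asg e ` set xs \<and> v \<noteq> w"

definition eS :: "var \<Rightarrow> var list \<Rightarrow> ('d,'u,'b) env \<Rightarrow> ('d,'u,'b) fact set \<Rightarrow> bool \<Rightarrow> ('d,'u,'b) env" where
  "eS x xs e S J = e\<lparr>env_U := \<lambda>P. {v \<in> env_U e P. relU x xs e S P v},
      env_B := \<lambda>f. {(v,w) \<in> env_B e f. relB x xs e S f v w \<or> (J \<and> junk xs e v w)}\<rparr>"

lemma eS_simps[simp]:
  "env_asg (eS x xs e S J) = env_asg e" "env_dom (eS x xs e S J) = env_dom e"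
  "env_U (eS x xs e S J) P = {v \<in> env_U e P. relU x xs e S P v}"
  "env_B (eS x xs e S J) f = {(v,w) \<in> env_B e f. relB x xs e S f v w \<or> (J \<and> junk xs e v w)}"
  by (simp_all add: eS_def)

lemma holds_eS_G:
  assumes inj: "inj_on (env_asg e) (set xs)" and xn: "x \<notin> set xs" and sub: "S \<subseteq> facts x xs e"
    and a: "a \<in> atoms_over (set xs)"
  shows "holds (eS x xs e S J) a \<longleftrightarrow> FG a \<in> S"
proof (cases a)
  case (AU P u)
  then have u: "u \<in> set xs" using a by (simp add: atoms_over_def)
  have "relU x xs e S P (env_asg e u) \<longleftrightarrow> FG (AU P u) \<in> S"
    using u inj by (auto simp: relU_def inj_on_eq_iff)
  moreover have "FG (AU P u) \<in> S \<Longrightarrow> env_asg e u \<in> env_U e P" using sub by auto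
  ultimately show ?thesis using AU by auto
next
  case (AB f u u')
  then have u: "u \<in> set xs" "u' \<in> set xs" using a by (auto simp: atoms_over_def)
  have "relB x xs e S f (env_asg e u) (env_asg e u') \<longleftrightarrow> FG (AB f u u') \<in> S"
    using u inj by (auto simp: relB_def inj_on_eq_iff)
  moreover have "\<not> junk xs e (env_asg e u) (env_asg e u')" using u by (auto simp: junk_def)
  moreover have "FG (AB f u u') \<in> S \<Longrightarrow> (env_asg e u, env_asg e u') \<in> env_B e f" using sub by auto
  ultimately show ?thesis using AB by auto
qed

lemma holds_eS_L:
  assumes inj: "inj_on (env_asg e) (set xs)" and xn: "x \<notin> set xs" and sub: "S \<subseteq> facts x xs e"
    and a: "a \<in> atoms_x x xs" and d: "d \<in> Dset xs e"
  shows "holds (upd (eS x xs e S J) x d) a \<longleftrightarrow> FL d a \<in> S"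
proof -
  have dn: "d \<notin> env_asg e ` set xs" using d by (simp add: Dset_def)
  have as: "((env_asg e)(x := d)) u = env_asg e u" if "u \<in> set xs" for u using that xn by auto
  have bk: "FL d a \<in> S \<Longrightarrow> holds (upd e x d) a" using sub by auto
  show ?thesis
  proof (cases a)
    case (AU P v)
    then have v: "v = x" using a by (auto simp: atoms_x_def)
    have "relU x xs e S P d \<longleftrightarrow> FL d (AU P x) \<in> S"
      using dn by (auto simp: relU_def)
    then show ?thesis using bk AU v by auto
  next
    case (AB f u w)
    then have uw: "u = x \<or> w = x" "u \<in> insert x (set xs)" "w \<in> insert x (set xs)"
      using a by (auto simp: atoms_x_def atoms_over_def)
    consider "u = x" "w = x" | "u = x" "w \<in> set xs" | "u \<in> set xs" "w = x"
      using uw xn by blast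
    then show ?thesis
    proof cases
      case 1
      have "relB x xs e S f d d \<longleftrightarrow> FL d (AB f x x) \<in> S"
        using dn by (auto simp: relB_def)
      moreover have "\<not> junk xs e d d" by (simp add: junk_def)
      ultimately show ?thesis using bk AB 1 by auto
    next
      case 2
      have "relB x xs e S f d (env_asg e w) \<longleftrightarrow> FL d (AB f x w) \<in> S"
        using dn 2 inj by (auto simp: relB_def inj_on_eq_iff)
      moreover have "\<not> junk xs e d (env_asg e w)" using 2 by (simp add: junk_def)
      ultimately show ?thesis using bk AB 2 as by auto
    next
      case 3
      have "relB x xs e S f (env_asg e u) d \<longleftrightarrow> FL d (AB f u x) \<in> S"
        using dn 3 inj by (auto simp: relB_def inj_on_eq_iff)
      moreover have "\<not> junk xs e (env_asg e u) d" using 3 by (simp add: junk_def)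
      ultimately show ?thesis using bk AB 3 as by auto
    qed
  qed
qed

lemma relU_un: "relU x xs e (S1 \<union> S2) P v \<longleftrightarrow> relU x xs e S1 P v \<or> relU x xs e S2 P v"
  by (auto simp: relU_def)

lemma relB_un: "relB x xs e (S1 \<union> S2) f v w \<longleftrightarrow> relB x xs e S1 f v w \<or> relB x xs e S2 f v w"
  unfolding relB_def by blast

lemma relU_disj:
  assumes inj: "inj_on (env_asg e) (set xs)" and "S1 \<inter> S2 = {}"
  shows "\<not> (relU x xs e S1 P v \<and> relU x xs e S2 P v)"
  using assms by (auto simp: relU_def inj_on_eq_iff)

lemma relB_disj:
  assumes inj: "inj_on (env_asg e) (set xs)" and "S1 \<inter> S2 = {}"
  shows "\<not> (relB x xs e S1 f v w \<and> relB x xs e S2 f v w)"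
  using assms unfolding relB_def by (auto simp: inj_on_eq_iff)

lemma relB_junk: "\<not> (relB x xs e S f v w \<and> junk xs e v w)"
  unfolding relB_def junk_def by blast

lemma covU:
  assumes wf: "wf_env e" and xn: "x \<notin> set xs" and v: "v \<in> env_U e P"
  shows "relU x xs e (facts x xs e) P v"
proof (cases "v \<in> env_asg e ` set xs")
  case True
  then obtain u where u: "u \<in> set xs" "v = env_asg e u" by blast
  then have "AU P u \<in> atoms_over (set xs)" by (simp add: atoms_over_def)
  then show ?thesis using u v by (auto simp: relU_def)
next
  case False
  have "v \<in> env_dom e" using wf v by (auto simp: wf_env_def)
  then have "v \<in> Dset xs e" using False by (simp add: Dset_def)
  moreover have "AU P x \<in> atoms_x x xs" by (simp add: atoms_x_def atoms_over_def)
  ultimately show ?thesis using False v by (auto simp: relU_def)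
qed

lemma covB:
  assumes wf: "wf_env e" and xn: "x \<notin> set xs" and vw: "(v,w) \<in> env_B e f"
  shows "relB x xs e (facts x xs e) f v w \<or> junk xs e v w"
proof -
  have dom: "v \<in> env_dom e" "w \<in> env_dom e" using wf vw by (auto simp: wf_env_def)
  have as: "((env_asg e)(x := d)) u = env_asg e u" if "u \<in> set xs" for u d using that xn by auto
  show ?thesis
  proof (cases "v \<in> env_asg e ` set xs")
    case True
    then obtain u where u: "u \<in> set xs" "v = env_asg e u" by blast
    show ?thesis
    proof (cases "w \<in> env_asg e ` set xs")
      case True
      then obtain u' where u': "u' \<in> set xs" "w = env_asg e u'" by blast
      have "AB f u u' \<in> atoms_over (set xs)" using u u' by (simp add: atoms_over_def)
      then have "FG (AB f u u') \<in> facts x xs e" using u u' vw by simp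
      then show ?thesis using u u' unfolding relB_def by blast
    next
      case False
      then have "w \<in> Dset xs e" using dom by (simp add: Dset_def)
      moreover have "AB f u x \<in> atoms_x x xs" using u by (simp add: atoms_x_def atoms_over_def)
      moreover have "holds (upd e x w) (AB f u x)" using u vw as by simp
      ultimately have "FL w (AB f u x) \<in> facts x xs e" by simp
      then show ?thesis using u False unfolding relB_def by blast
    qed
  next
    case False
    then have vD: "v \<in> Dset xs e" using dom by (simp add: Dset_def)
    show ?thesis
    proof (cases "w \<in> env_asg e ` set xs")
      case True
      then obtain u' where u': "u' \<in> set xs" "w = env_asg e u'" by blast
      have "AB f x u' \<in> atoms_x x xs" using u' by (simp add: atoms_x_def atoms_over_def)
      moreover have "holds (upd e x v) (AB f x u')" using u' vw as by simp
      ultimately have "FL v (AB f x u') \<in> facts x xs e" using vD by simp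
      then show ?thesis using u' False unfolding relB_def by blast
    next
      case wn: False
      show ?thesis
      proof (cases "v = w")
        case True
        have "AB f x x \<in> atoms_x x xs" by (simp add: atoms_x_def atoms_over_def)
        moreover have "holds (upd e x v) (AB f x x)" using vw True by simp
        ultimately have "FL v (AB f x x) \<in> facts x xs e" using vD by simp
        then show ?thesis using True False unfolding relB_def by blast
      next
        case neq: False
        then show ?thesis using False wn by (simp add: junk_def)
      qed
    qed
  qed
qed

lemma split_eS:
  assumes wf: "wf_env e" and inj: "inj_on (env_asg e) (set xs)" and xn: "x \<notin> set xs"
    and un: "S1 \<union> S2 = facts x xs e" and dj: "S1 \<inter> S2 = {}"
  shows "split2 e (eS x xs e S1 True) (eS x xs e S2 False)"
  unfolding split2_def
proof (intro conjI allI)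
  fix P
  show "env_U e P = env_U (eS x xs e S1 True) P \<union> env_U (eS x xs e S2 False) P"
    using covU[OF wf xn, of _ P] un relU_un[of x xs e S1 S2 P] by auto
  show "env_U (eS x xs e S1 True) P \<inter> env_U (eS x xs e S2 False) P = {}"
    using relU_disj[OF inj dj, of x P] by auto
next
  fix f
  show "env_B e f = env_B (eS x xs e S1 True) f \<union> env_B (eS x xs e S2 False) f"
    using covB[OF wf xn, of _ _ f] un relB_un[of x xs e S1 S2 f] by auto
  show "env_B (eS x xs e S1 True) f \<inter> env_B (eS x xs e S2 False) f = {}"
    using relB_disj[OF inj dj, of x f] relB_junk[of x xs e S2 f] by auto
qed simp_all

lemma side_sat:
  fixes C :: "('u::finite,'b::finite) cstar" and e :: "('d,'u,'b) env"
  assumes cs: "is_cstar C" and wf: "wf_env e"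
    and E: "sat e (E_fm (cs_E C) (cs_xs C))" and dist: "distinct (map (env_asg e) (cs_xs C))"
    and sub: "S \<subseteq> facts (cs_x C) (cs_xs C) e"
    and Seq: "S = FG ` cs_F C \<union> (\<Union>T\<in>ext_sets (cs_x C) (cs_xs C). fo T {i} (A T))"
    and cr: "\<forall>T\<in>ext_sets (cs_x C) (cs_xs C). crel (A T) (cs_s C T)"
    and dA: "\<forall>T\<in>ext_sets (cs_x C) (cs_xs C). \<forall>T'\<in>ext_sets (cs_x C) (cs_xs C). T \<noteq> T' \<longrightarrow> A T \<inter> A T' = {}"
    and allM: "\<forall>d\<in>Dset (cs_xs C) e. FM d i \<in> S"
  shows "sat (eS (cs_x C) (cs_xs C) e S J) (cs_fm C)"
proof -
  let ?x = "cs_x C" and ?xs = "cs_xs C"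
  let ?EX = "ext_sets ?x ?xs :: ('u,'b) atom set set"
  let ?e = "eS ?x ?xs e S J"
  have xn: "?x \<notin> set ?xs" using cs by (simp add: is_cstar_def)
  have inj: "inj_on (env_asg e) (set ?xs)" using dist by (simp add: distinct_map)
  have Fsub: "cs_F C \<subseteq> atoms_over (set ?xs)" using cs by (auto simp: is_cstar_def gccat_sets_def)
  have s1: "sat ?e (E_fm (cs_E C) ?xs)" using E sat_E_asg[of ?e e] by simp
  have s2: "distinct (map (env_asg ?e) ?xs)" using dist by simp
  have s3: "\<forall>a\<in>atoms_over (set ?xs). holds ?e a \<longleftrightarrow> a \<in> cs_F C"
  proof
    fix a :: "('u,'b) atom" assume a: "a \<in> atoms_over (set ?xs)"
    have "holds ?e a \<longleftrightarrow> FG a \<in> S" by (rule holds_eS_G[OF inj xn sub a])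
    also have "\<dots> \<longleftrightarrow> a \<in> cs_F C" using Seq by auto
    finally show "holds ?e a \<longleftrightarrow> a \<in> cs_F C" .
  qed
  have AD: "A T \<subseteq> Dset ?xs e" if "T \<in> ?EX" for T
  proof
    fix d assume "d \<in> A T"
    then have "FM d i \<in> S" using Seq that by auto
    then show "d \<in> Dset ?xs e" using sub by auto
  qed
  have ex: "\<exists>T0\<in>?EX. d \<in> A T0" if "d \<in> Dset ?xs e" for d
  proof -
    have "FM d i \<in> S" using allM that by blast
    then show ?thesis using Seq by auto
  qed
  have uniq: "T = T'" if "T \<in> ?EX" "T' \<in> ?EX" "d \<in> A T" "d \<in> A T'" for T T' d
    using dA that by blast
  have FL: "FL d a \<in> S \<longleftrightarrow> a \<in> T0" if "T0 \<in> ?EX" "d \<in> A T0" for d a T0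
  proof
    assume "FL d a \<in> S"
    then obtain T' where "T' \<in> ?EX" "d \<in> A T'" "a \<in> T'" using Seq by auto
    then show "a \<in> T0" using uniq[OF that(1) \<open>T' \<in> ?EX\<close> that(2)] by simp
  next
    assume "a \<in> T0" then show "FL d a \<in> S" using Seq that by auto
  qed
  have s4: "\<forall>T\<in>?EX. cnt_ok (card (ecls ?x ?xs ?e T)) (cs_s C T)"
  proof
    fix T assume T: "T \<in> ?EX"
    have "ecls ?x ?xs ?e T = A T"
    proof (rule set_eqI)
      fix d
      show "d \<in> ecls ?x ?xs ?e T \<longleftrightarrow> d \<in> A T"
      proof (cases "d \<in> Dset ?xs e")
        case False
        then show ?thesis using AD[OF T] by (auto simp: ecls_def Dset_def)
      next
        case True
        then obtain T0 where T0: "T0 \<in> ?EX" "d \<in> A T0" using ex by blast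
        have "d \<in> ecls ?x ?xs ?e T \<longleftrightarrow> (\<forall>a\<in>atoms_x ?x ?xs. FL d a \<in> S \<longleftrightarrow> a \<in> T)"
          using True holds_eS_L[OF inj xn sub _ True, of _ J] by (auto simp: ecls_def Dset_def)
        also have "\<dots> \<longleftrightarrow> (\<forall>a\<in>atoms_x ?x ?xs. a \<in> T0 \<longleftrightarrow> a \<in> T)" using FL[OF T0] by simp
        also have "\<dots> \<longleftrightarrow> T0 = T" using T T0(1) by (auto simp: ext_sets_def)
        also have "\<dots> \<longleftrightarrow> d \<in> A T" using uniq[OF T0(1) T T0(2)] T0 by blast
        finally show ?thesis .
      qed
    qed
    moreover have "finite (A T)" using AD[OF T] wf
      by (auto simp: wf_env_def Dset_def intro: rev_finite_subset)
    ultimately show "cnt_ok (card (ecls ?x ?xs ?e T)) (cs_s C T)" using crel_cnt cr T by auto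
  qed
  show ?thesis using s1 s2 s3 s4 sat_cs_fm[OF cs, of ?e] by simp
qed

theorem lemma17:
  fixes C1 C2 C3 :: "('u::finite, 'b::finite) cstar"
    and e :: "('d, 'u, 'b) env"
  assumes "is_cstar C1" and "is_cstar C2" and "compatible C1 C2"
    and "is_cstar C3" and "ERes C1 C2 C3"
    and "wf_env e" and "sat e (cs_fm C3)"
  shows "sat e (FStar (cs_fm C1) (cs_fm C2))"
proof -
  note cs1 = assms(1) and cs2 = assms(2) and cs3 = assms(4) and wf = assms(6)
  let ?x = "cs_x C1" and ?xs = "cs_xs C1"
  have eqs: "cs_E C2 = cs_E C1" "cs_xs C2 = ?xs" "cs_x C2 = ?x"
    "cs_E C3 = cs_E C1" "cs_xs C3 = ?xs" "cs_x C3 = ?x"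
    using assms(3,5) by (auto simp: compatible_def ERes_def)
  obtain H where H: "deriv_result C1 C2 H" "ident\<^sup>*\<^sup>* (S_tok {1,2} C3) H"
    using assms(5) by (auto simp: ERes_def)
  obtain W1 where W1: "phase1 (W0 C1 C2) W1" "phase2 W1 H" using H(1) by (auto simp: deriv_result_def)
  let ?S = "facts ?x ?xs e :: ('d,'u,'b) fact set"
  have sc3: "sat e (E_fm (cs_E C1) ?xs)" "distinct (map (env_asg e) ?xs)"
    using assms(7) sat_cs_fm[OF cs3] eqs by auto
  have m3: "msat (S_tok {1,2} C3) ?S" using part_A[OF cs3 wf assms(7)] eqs by simp
  have "msat H ?S" by (rule ident_rtc[OF H(2) m3])
  then have "msat W1 ?S" by (rule phase2_back[OF W1(2)])
  then have "msat (W0 C1 C2) ?S" by (rule phase1_back[OF W1(1)])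
  then have "msat (S_tok {1} C1 + S_tok {2} C2) ?S" by (rule W0_back)
  from msat_plus_elim[OF this] obtain S1 S2 where S12: "msat (S_tok {1} C1) S1" "msat (S_tok {2} C2) S2"
    "S1 \<inter> S2 = {}" "?S = S1 \<union> S2" by blast
  have fin1: "finite (ext_sets (cs_x C1) (cs_xs C1) :: ('u,'b) atom set set)"
    by (simp add: ext_sets_def finite_atoms_x)
  have fin2: "finite (ext_sets (cs_x C2) (cs_xs C2) :: ('u,'b) atom set set)"
    by (simp add: ext_sets_def finite_atoms_x)
  obtain A1 where A1: "S1 = FG ` cs_F C1 \<union> (\<Union>T\<in>ext_sets (cs_x C1) (cs_xs C1). fo T {1} (A1 T))"
     "\<forall>T\<in>ext_sets (cs_x C1) (cs_xs C1). crel (A1 T) (cs_s C1 T)"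
     "\<forall>T\<in>ext_sets (cs_x C1) (cs_xs C1). \<forall>T'\<in>ext_sets (cs_x C1) (cs_xs C1). T \<noteq> T' \<longrightarrow> A1 T \<inter> A1 T' = {}"
    using S_tok_elim[OF fin1 S12(1)] by blast
  obtain A2 where A2: "S2 = FG ` cs_F C2 \<union> (\<Union>T\<in>ext_sets (cs_x C2) (cs_xs C2). fo T {2} (A2 T))"
     "\<forall>T\<in>ext_sets (cs_x C2) (cs_xs C2). crel (A2 T) (cs_s C2 T)"
     "\<forall>T\<in>ext_sets (cs_x C2) (cs_xs C2). \<forall>T'\<in>ext_sets (cs_x C2) (cs_xs C2). T \<noteq> T' \<longrightarrow> A2 T \<inter> A2 T' = {}"
    using S_tok_elim[OF fin2 S12(2)] by blast
  have M1: "\<forall>d\<in>Dset ?xs e. FM d 1 \<in> S1"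
  proof
    fix d assume "d \<in> Dset ?xs e"
    then have "FM d 1 \<in> ?S" by simp
    moreover have "FM d 1 \<notin> S2" using A2(1) by auto
    ultimately show "FM d 1 \<in> S1" using S12(4) by blast
  qed
  have M2: "\<forall>d\<in>Dset ?xs e. FM d 2 \<in> S2"
  proof
    fix d assume "d \<in> Dset ?xs e"
    then have "FM d 2 \<in> ?S" by simp
    moreover have "FM d 2 \<notin> S1" using A1(1) by auto
    ultimately show "FM d 2 \<in> S2" using S12(4) by blast
  qed
  have sub1: "S1 \<subseteq> ?S" and sub2: "S2 \<subseteq> ?S" using S12(4) by auto
  have xn: "?x \<notin> set ?xs" using cs1 by (simp add: is_cstar_def)
  have inj: "inj_on (env_asg e) (set ?xs)" using sc3(2) by (simp add: distinct_map)
  have sp: "split2 e (eS ?x ?xs e S1 True) (eS ?x ?xs e S2 False)"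
    by (rule split_eS[OF wf inj xn S12(4)[symmetric] S12(3)])
  have r1: "sat (eS ?x ?xs e S1 True) (cs_fm C1)"
    by (rule side_sat[OF cs1 wf sc3(1) sc3(2) sub1 A1(1) A1(2) A1(3) M1])
  have r2: "sat (eS ?x ?xs e S2 False) (cs_fm C2)"
  proof -
    have "sat (eS (cs_x C2) (cs_xs C2) e S2 False) (cs_fm C2)"
    proof (rule side_sat[OF cs2 wf, where A=A2 and i=2])
      show "sat e (E_fm (cs_E C2) (cs_xs C2))" "distinct (map (env_asg e) (cs_xs C2))"
        using sc3 eqs by simp_all
      show "S2 \<subseteq> facts (cs_x C2) (cs_xs C2) e" using sub2 eqs by simp
      show "\<forall>d\<in>Dset (cs_xs C2) e. FM d 2 \<in> S2" using M2 eqs by simp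
    qed (use A2 in auto)
    then show ?thesis using eqs by simp
  qed
  show ?thesis using sp r1 r2 by auto
qed

end
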